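(* Let $R$ be a discrete valuation ring with field of fractions $K$, uniformizer $\pi$ and residue field $k$. Let $A$ be an $R$-algebra with an $R$-linear involution $a\mapsto a^*$, let $V$ be a finite-dimensional $K$-vector space which is an $A$-module (via an $R$-bilinear map $A\times V\to V$) admitting a lattice $L$ with $A\cdot L\subset L$, and let $B$ be a nondegenerate $K$-bilinear form on $V$ with $B(ax,y)=B(x,a^*y)$ for all $a\in A$, $x,y\in V$, where either $B$ is alternating, or $B$ is symmetric and $\mathrm{char}(k)\neq2$. Then there exists a lattice $M$ of $V$ with $A\cdot M\subset M$ which is almost self-dual with respect to $B$.
   Context: A lattice of $V$ is a free $R$-submodule $M$ with $K\otimes_RM\to V$ an isomorphism; its dual is $M'=\{x\in V:B(x,y)\in R\ \forall y\in M\}$; $M$ is almost self-dual if $\pi M'\subset M\subset M'$. *)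

theory Defs
  imports Main "HOL.Vector_Spaces"
begin

text \<open>The associated discrete valuation ring is R = {0} \<union> {x. v x \<ge> 0}, whose
fraction field is K.\<close>

definition discrete_valuation :: "('k::field \<Rightarrow> int) \<Rightarrow> bool" where
  "discrete_valuation v \<longleftrightarrow>
     (\<forall>x y. x \<noteq> 0 \<longrightarrow> y \<noteq> 0 \<longrightarrow> v (x * y) = v x + v y) \<and>
     (\<forall>x y. x \<noteq> 0 \<longrightarrow> y \<noteq> 0 \<longrightarrow> x + y \<noteq> 0 \<longrightarrow> v (x + y) \<ge> min (v x) (v y)) \<and>
     (\<forall>n. \<exists>x. x \<noteq> 0 \<and> v x = n)"

definition val_ring :: "('k::field \<Rightarrow> int) \<Rightarrow> 'k set" where
  "val_ring v = {x. x = 0 \<or> v x \<ge> 0}"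

definition val_max_ideal :: "('k::field \<Rightarrow> int) \<Rightarrow> 'k set" where
  "val_max_ideal v = {x. x = 0 \<or> v x > 0}"

definition residue_char_not_2 :: "('k::field \<Rightarrow> int) \<Rightarrow> bool" where
  "residue_char_not_2 v \<longleftrightarrow> (1 + 1 :: 'k) \<notin> val_max_ideal v"

text \<open>A lattice: a free R-submodule M of V such that K \<otimes>_R M \<rightarrow> V is an
isomorphism, i.e. M is the R-span of a K-basis of V.\<close>
definition is_lattice ::
  "('k::field \<Rightarrow> 'v::ab_group_add \<Rightarrow> 'v) \<Rightarrow> 'k set \<Rightarrow> 'v set \<Rightarrow> bool" where
  "is_lattice scale R M \<longleftrightarrow>
     (\<exists>b. finite b \<and> \<not> module.dependent scale b \<and> module.span scale b = UNIV \<and>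
          M = {y. \<exists>c. (\<forall>x\<in>b. c x \<in> R) \<and> y = (\<Sum>x\<in>b. scale (c x) x)})"

definition dual_lattice ::
  "'k set \<Rightarrow> ('v \<Rightarrow> 'v \<Rightarrow> 'k) \<Rightarrow> 'v set \<Rightarrow> 'v set" where
  "dual_lattice R B M = {x. \<forall>y\<in>M. B x y \<in> R}"

definition almost_self_dual ::
  "('k::field \<Rightarrow> 'v \<Rightarrow> 'v) \<Rightarrow> 'k set \<Rightarrow> 'k \<Rightarrow> ('v \<Rightarrow> 'v \<Rightarrow> 'k) \<Rightarrow> 'v set \<Rightarrow> bool" where
  "almost_self_dual scale R pi B M \<longleftrightarrow>
     (scale pi ` dual_lattice R B M \<subseteq> M \<and> M \<subseteq> dual_lattice R B M)"

end

theory Submission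
  imports Defs
begin



section \<open>Valuation facts\<close>

context fixes v :: "'k::field \<Rightarrow> int" assumes dv: "discrete_valuation v"
begin

lemma vmult: "x \<noteq> 0 \<Longrightarrow> y \<noteq> 0 \<Longrightarrow> v (x * y) = v x + v y"
  using dv unfolding discrete_valuation_def by blast

lemma vadd: "x \<noteq> 0 \<Longrightarrow> y \<noteq> 0 \<Longrightarrow> x + y \<noteq> 0 \<Longrightarrow> v (x + y) \<ge> min (v x) (v y)"
  using dv unfolding discrete_valuation_def by blast

lemma v1: "v 1 = 0"
  using vmult[of 1 1] by simp

lemma vm1: "v (-1) = 0"
  using vmult[of "-1" "-1"] v1 by simp

lemma vneg: "v (- x) = v x"
proof (cases "x = 0")
  case False
  then show ?thesis using vmult[of "-1" x] vm1 by simp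
qed simp

lemma vinv: "x \<noteq> 0 \<Longrightarrow> v (inverse x) = - v x"
  using vmult[of x "inverse x"] v1 by simp

lemma vdiv: "x \<noteq> 0 \<Longrightarrow> y \<noteq> 0 \<Longrightarrow> v (x / y) = v x - v y"
  using vmult[of x "inverse y"] vinv[of y] by (simp add: divide_inverse)

lemma vpow: "p \<noteq> 0 \<Longrightarrow> v (p ^ n) = int n * v p"
  by (induction n) (auto simp: v1 vmult algebra_simps)

lemma R_zero: "0 \<in> val_ring v" and R_one: "1 \<in> val_ring v"
  by (auto simp: val_ring_def v1)

lemma R_add: "x \<in> val_ring v \<Longrightarrow> y \<in> val_ring v \<Longrightarrow> x + y \<in> val_ring v"
  unfolding val_ring_def using vadd[of x y] by fastforce

lemma R_mult: "x \<in> val_ring v \<Longrightarrow> y \<in> val_ring v \<Longrightarrow> x * y \<in> val_ring v"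
  unfolding val_ring_def using vmult[of x y] by fastforce

lemma R_neg: "x \<in> val_ring v \<Longrightarrow> - x \<in> val_ring v"
  unfolding val_ring_def using vneg[of x] by auto

lemma R_diff: "x \<in> val_ring v \<Longrightarrow> y \<in> val_ring v \<Longrightarrow> x - y \<in> val_ring v"
  using R_add[of x "-y"] R_neg[of y] by simp

lemma R_sum: "(\<And>i. i \<in> I \<Longrightarrow> f i \<in> val_ring v) \<Longrightarrow> sum f I \<in> val_ring v"
  by (induction I rule: infinite_finite_induct) (auto intro: R_add R_zero)

lemma R_pow: "x \<in> val_ring v \<Longrightarrow> x ^ n \<in> val_ring v"
  by (induction n) (auto intro: R_mult R_one)

lemma R_div: "c0 \<noteq> 0 \<Longrightarrow> (c = 0 \<or> v c \<ge> v c0) \<Longrightarrow> c / c0 \<in> val_ring v"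
  unfolding val_ring_def using vdiv[of c c0] by (cases "c = 0") auto

end




definition Rsp :: "('k::field \<Rightarrow> 'v::ab_group_add \<Rightarrow> 'v) \<Rightarrow> 'k set \<Rightarrow> 'v set \<Rightarrow> 'v set" where
  "Rsp scale R S = {y. \<exists>c. (\<forall>x\<in>S. c x \<in> R) \<and> y = (\<Sum>x\<in>S. scale (c x) x)}"

locale lctx = vector_space scale for scale :: "'k::field \<Rightarrow> 'v::ab_group_add \<Rightarrow> 'v" (infixr \<open>*s\<close> 75) +
  fixes v :: "'k \<Rightarrow> int" and pi :: 'k
  assumes dv: "discrete_valuation v" and pi_nz: "pi \<noteq> 0" and vpi: "v pi = 1"
begin

abbreviation "R \<equiv> val_ring v"
abbreviation "RS S \<equiv> Rsp scale R S"

definition rsub :: "'v set \<Rightarrow> bool" where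
  "rsub N \<longleftrightarrow> 0 \<in> N \<and> (\<forall>x\<in>N. \<forall>y\<in>N. x + y \<in> N) \<and> (\<forall>r\<in>R. \<forall>x\<in>N. r *s x \<in> N)"

lemma pipow_nz: "pi ^ n \<noteq> 0" using pi_nz by simp
lemma v_pipow: "v (pi ^ n) = int n" using vpow[OF dv pi_nz] vpi by simp
lemma pi_R: "pi \<in> R" using vpi by (simp add: val_ring_def)
lemma pipow_R: "pi ^ n \<in> R" using R_pow[OF dv pi_R] .

lemma rsubD: assumes "rsub N"
  shows "0 \<in> N" "x \<in> N \<Longrightarrow> y \<in> N \<Longrightarrow> x + y \<in> N" "r \<in> R \<Longrightarrow> x \<in> N \<Longrightarrow> r *s x \<in> N"
  using assms unfolding rsub_def by auto

lemma rsub_diff: assumes "rsub N" "x \<in> N" "y \<in> N" shows "x - y \<in> N"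
proof -
  have "(-1) *s y \<in> N" using rsubD(3)[OF assms(1) R_neg[OF dv R_one[OF dv]] assms(3)] .
  then have "x + (-1) *s y \<in> N" using rsubD(2)[OF assms(1) assms(2)] by blast
  then show ?thesis by simp
qed

lemma rsub_sum: assumes "rsub N" "\<And>i. i \<in> I \<Longrightarrow> f i \<in> N" shows "sum f I \<in> N"
  using assms(2) by (induction I rule: infinite_finite_induct) (auto intro: rsubD[OF assms(1)])

lemma Rsp_sub: assumes "rsub N" "S \<subseteq> N" shows "RS S \<subseteq> N"
proof
  fix y assume "y \<in> RS S"
  then obtain c where c: "\<forall>x\<in>S. c x \<in> R" "y = (\<Sum>x\<in>S. c x *s x)" unfolding Rsp_def by auto
  have "\<And>x. x \<in> S \<Longrightarrow> c x *s x \<in> N" using rsubD(3)[OF assms(1)] c(1) assms(2) by auto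
  then show "y \<in> N" unfolding c(2) by (rule rsub_sum[OF assms(1)])
qed

lemma rsub_Rsp: "rsub (RS S)"
  unfolding rsub_def Rsp_def
proof (intro conjI ballI)
  show "0 \<in> {y. \<exists>c. (\<forall>x\<in>S. c x \<in> R) \<and> y = (\<Sum>x\<in>S. c x *s x)}"
    by (rule CollectI, rule exI[of _ "\<lambda>_. 0"]) (simp add: R_zero[OF dv])
next
  fix x y assume "x \<in> {y. \<exists>c. (\<forall>x\<in>S. c x \<in> R) \<and> y = (\<Sum>x\<in>S. c x *s x)}"
    "y \<in> {y. \<exists>c. (\<forall>x\<in>S. c x \<in> R) \<and> y = (\<Sum>x\<in>S. c x *s x)}"
  then obtain c d where "\<forall>x\<in>S. c x \<in> R" "x = (\<Sum>x\<in>S. c x *s x)" "\<forall>x\<in>S. d x \<in> R" "y = (\<Sum>x\<in>S. d x *s x)"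
    by auto
  then show "x + y \<in> {y. \<exists>c. (\<forall>x\<in>S. c x \<in> R) \<and> y = (\<Sum>x\<in>S. c x *s x)}"
    by (intro CollectI exI[of _ "\<lambda>z. c z + d z"])
       (auto simp: R_add[OF dv] scale_left_distrib sum.distrib)
next
  fix r x assume "r \<in> R" "x \<in> {y. \<exists>c. (\<forall>x\<in>S. c x \<in> R) \<and> y = (\<Sum>x\<in>S. c x *s x)}"
  then obtain c where "\<forall>x\<in>S. c x \<in> R" "x = (\<Sum>x\<in>S. c x *s x)" by auto
  then show "r *s x \<in> {y. \<exists>c. (\<forall>x\<in>S. c x \<in> R) \<and> y = (\<Sum>x\<in>S. c x *s x)}"
    using \<open>r \<in> R\<close>
    by (intro CollectI exI[of _ "\<lambda>z. r * c z"]) (auto simp: R_mult[OF dv] scale_sum_right)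
qed

lemma Rsp_span: "RS S \<subseteq> span S"
proof
  fix y assume "y \<in> RS S"
  then obtain c where c: "y = (\<Sum>x\<in>S. c x *s x)" unfolding Rsp_def by auto
  show "y \<in> span S" unfolding c by (rule span_sum, rule span_scale, rule span_base)
qed

lemma Rsp_base: assumes "finite S" "x \<in> S" shows "x \<in> RS S"
  unfolding Rsp_def
proof (rule CollectI, rule exI[of _ "\<lambda>z. if z = x then 1 else 0"], intro conjI)
  show "\<forall>z\<in>S. (if z = x then 1 else 0) \<in> R" by (auto simp: R_one[OF dv] R_zero[OF dv])
  have "(\<Sum>z\<in>S. (if z = x then 1 else 0) *s z) = (\<Sum>z\<in>S. if z = x then z else 0)"
    by (rule sum.cong) auto
  also have "\<dots> = x" using assms by (simp add: sum.delta)
  finally show "x = (\<Sum>z\<in>S. (if z = x then 1 else 0) *s z)" by simp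
qed

lemma Rsp_empty: "RS {} = {0}"
  unfolding Rsp_def by auto

lemma Rsp_insert: assumes "finite S" "e \<notin> S"
  shows "RS (insert e S) = {r *s e + y | r y. r \<in> R \<and> y \<in> RS S}"
proof (intro equalityI subsetI)
  fix x assume "x \<in> RS (insert e S)"
  then obtain c where c: "\<forall>z\<in>insert e S. c z \<in> R" "x = (\<Sum>z\<in>insert e S. c z *s z)"
    unfolding Rsp_def by auto
  then have "x = c e *s e + (\<Sum>z\<in>S. c z *s z)" using assms by simp
  moreover have "(\<Sum>z\<in>S. c z *s z) \<in> RS S" using c unfolding Rsp_def by auto
  ultimately show "x \<in> {r *s e + y | r y. r \<in> R \<and> y \<in> RS S}" using c by auto
next
  fix x assume "x \<in> {r *s e + y | r y. r \<in> R \<and> y \<in> RS S}"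
  then obtain r y d where "r \<in> R" "\<forall>z\<in>S. d z \<in> R" "y = (\<Sum>z\<in>S. d z *s z)" "x = r *s e + y"
    unfolding Rsp_def by auto
  moreover have "(\<Sum>z\<in>S. (d(e := r)) z *s z) = (\<Sum>z\<in>S. d z *s z)"
    using assms by (intro sum.cong) auto
  ultimately show "x \<in> RS (insert e S)" unfolding Rsp_def using assms
    by (intro CollectI exI[of _ "d(e := r)"]) auto
qed

lemma H: assumes "finite Z" shows "\<exists>n. \<forall>z\<in>Z. pi ^ n * z \<in> R"
proof -
  define n where "n = (\<Sum>z\<in>Z. nat (- v z))"
  have "pi ^ n * z \<in> R" if z: "z \<in> Z" for z
  proof (cases "z = 0")
    case False
    have le: "nat (- v z) \<le> n" using member_le_sum[OF z, of "\<lambda>z. nat (- v z)"] assms n_def by simp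
    then have le2: "- v z \<le> int n" by linarith
    have "v (pi ^ n * z) = int n + v z" using vmult[OF dv pipow_nz False] v_pipow by simp
    then show ?thesis using le2 by (simp add: val_ring_def)
  qed (simp add: val_ring_def)
  then show ?thesis by blast
qed

lemma pow_mono_R: assumes "pi ^ n * z \<in> R" "n \<le> m" shows "pi ^ m * z \<in> R"
proof -
  have "pi ^ m = pi ^ (m - n) * pi ^ n" by (metis assms(2) le_add_diff_inverse2 power_add)
  then have eq: "pi ^ m * z = pi ^ (m - n) * (pi ^ n * z)" by (simp add: mult.assoc)
  show ?thesis unfolding eq by (rule R_mult[OF dv pipow_R assms(1)])
qed

lemma pow_mono_N: assumes "rsub N" "pi ^ n *s z \<in> N" "n \<le> m" shows "pi ^ m *s z \<in> N"
proof -
  have "pi ^ m = pi ^ (m - n) * pi ^ n" by (metis assms(3) le_add_diff_inverse2 power_add)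
  then have eq: "pi ^ m *s z = pi ^ (m - n) *s (pi ^ n *s z)" by simp
  show ?thesis unfolding eq by (rule rsubD(3)[OF assms(1) pipow_R assms(2)])
qed

lemma G1: assumes "finite S" "y \<in> span S" shows "\<exists>n. pi ^ n *s y \<in> RS S"
proof -
  obtain u where u: "y = (\<Sum>e\<in>S. u e *s e)" using assms span_finite by auto
  obtain n where n: "\<forall>z\<in>u ` S. pi ^ n * z \<in> R" using H assms(1) by blast
  have "pi ^ n *s y = (\<Sum>e\<in>S. (pi ^ n * u e) *s e)" by (simp add: u scale_sum_right)
  then show ?thesis using n unfolding Rsp_def by (intro exI[of _ n] CollectI exI[of _ "\<lambda>e. pi ^ n * u e"]) auto
qed

lemma G: assumes "finite S" "finite F" "F \<subseteq> span S" shows "\<exists>n. \<forall>y\<in>F. pi ^ n *s y \<in> RS S"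
  using assms(2,3)
proof (induction F rule: finite_induct)
  case empty then show ?case by simp
next
  case (insert y F)
  then obtain n where n: "\<forall>y\<in>F. pi ^ n *s y \<in> RS S" by auto
  obtain m where m: "pi ^ m *s y \<in> RS S" using G1[OF assms(1)] insert by blast
  show ?case
    using n m pow_mono_N[OF rsub_Rsp, of n _ S "n + m"] pow_mono_N[OF rsub_Rsp, of m y S "n + m"]
    by (intro exI[of _ "n + m"]) auto
qed

lemma coef_uniq: assumes "e \<notin> span S" "x - c *s e \<in> span S" "x - d *s e \<in> span S" shows "c = d"
proof (rule ccontr)
  assume "c \<noteq> d"
  have "(x - c *s e) - (x - d *s e) \<in> span S" using assms(2,3) by (rule span_diff)
  moreover have "(x - c *s e) - (x - d *s e) = (d - c) *s e" by (simp add: scale_left_diff_distrib)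
  ultimately have "(d - c) *s e \<in> span S" by simp
  then have "(1 / (d - c)) *s ((d - c) *s e) \<in> span S" by (rule span_scale)
  then have "e \<in> span S" using \<open>c \<noteq> d\<close> by simp
  then show False using assms(1) by simp
qed

end



context lctx begin

lemma sandwich:
  assumes "finite b" "independent b" "N \<subseteq> span b" "rsub N" "\<forall>e\<in>b. pi ^ a *s e \<in> N"
    "\<forall>x\<in>N. pi ^ a *s x \<in> RS b"
  shows "\<exists>g. finite g \<and> independent g \<and> span g = span b \<and> N = RS g"
  using assms
proof (induction b arbitrary: N rule: finite_induct)
  case empty
  then have "N = {0}" using rsubD(1) by auto
  then show ?case by (intro exI[of _ "{}"]) (simp add: Rsp_empty independent_empty)
next
  case (insert e b0 N)
  have ind0: "independent b0" and enot: "e \<notin> span b0"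
    using insert.prems(1) insert.hyps(2) by (auto simp: independent_insert)
  define N0 where "N0 = N \<inter> span b0"
  have rsub0: "rsub N0" using insert.prems(3) unfolding rsub_def N0_def
    by (auto intro: span_add span_scale span_zero)
  have h1: "\<forall>e'\<in>b0. pi ^ a *s e' \<in> N0" using insert.prems(4) unfolding N0_def
    by (auto intro: span_scale span_base)
  have h2: "\<forall>x\<in>N0. pi ^ a *s x \<in> RS b0"
  proof
    fix x assume x: "x \<in> N0"
    then have "pi ^ a *s x \<in> RS (insert e b0)" using insert.prems(5) N0_def by auto
    then obtain r y where ry: "r \<in> R" "y \<in> RS b0" "pi ^ a *s x = r *s e + y"
      using Rsp_insert[OF insert.hyps] by auto
    have xs: "pi ^ a *s x \<in> span b0" using x N0_def span_scale by auto
    have "y \<in> span b0" using ry(2) Rsp_span by auto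
    then have "pi ^ a *s x - r *s e \<in> span b0" using ry(3) by simp
    moreover have "pi ^ a *s x - 0 *s e \<in> span b0" using xs by simp
    ultimately have "r = 0" using coef_uniq[OF enot] by blast
    then show "pi ^ a *s x \<in> RS b0" using ry by simp
  qed
  have "N0 \<subseteq> span b0" unfolding N0_def by auto
  from insert.IH[OF ind0 this rsub0 h1 h2]
  obtain g0 where g0: "finite g0" "independent g0" "span g0 = span b0" "N0 = RS g0"
    by auto
  define coef where "coef x = (SOME c. x - c *s e \<in> span b0)" for x
  have coef: "x - coef x *s e \<in> span b0" if "x \<in> N" for x
  proof -
    have "x \<in> span (insert e b0)" using that insert.prems(2) by auto
    then have "\<exists>c. x - c *s e \<in> span b0" using span_breakdown_eq by auto
    then show ?thesis unfolding coef_def by (rule someI_ex)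
  qed
  have coef_eq: "coef x = c" if "x \<in> N" "x - c *s e \<in> span b0" for x c
    using coef_uniq[OF enot coef[OF that(1)] that(2)] .
  have bound: "- int a \<le> v (coef x)" if "x \<in> N" "coef x \<noteq> 0" for x
  proof -
    have "pi ^ a *s x \<in> RS (insert e b0)" using insert.prems(5) that by auto
    then obtain r y where ry: "r \<in> R" "y \<in> RS b0" "pi ^ a *s x = r *s e + y"
      using Rsp_insert[OF insert.hyps] by auto
    have "y \<in> span b0" using ry(2) Rsp_span by auto
    then have "pi ^ a *s x - r *s e \<in> span b0" using ry(3) by simp
    moreover have "pi ^ a *s x - (pi ^ a * coef x) *s e \<in> span b0"
    proof -
      have "pi ^ a *s (x - coef x *s e) \<in> span b0" using coef[OF that(1)] by (rule span_scale)
      then show ?thesis by (simp add: scale_right_diff_distrib)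
    qed
    ultimately have "pi ^ a * coef x = r" using coef_uniq[OF enot] by blast
    then have "pi ^ a * coef x \<in> R" using ry(1) by simp
    moreover have "pi ^ a * coef x \<noteq> 0" using that(2) pipow_nz by simp
    moreover have "v (pi ^ a * coef x) = int a + v (coef x)"
      using vmult[OF dv pipow_nz that(2)] v_pipow by simp
    ultimately show ?thesis using pi_nz by (simp add: val_ring_def)
  qed
  have ex: "pi ^ a *s e \<in> N \<and> coef (pi ^ a *s e) \<noteq> 0"
  proof -
    have m: "pi ^ a *s e \<in> N" using insert.prems(4) by simp
    moreover have "coef (pi ^ a *s e) = pi ^ a" using coef_eq[OF m] span_zero by simp
    ultimately show ?thesis using pipow_nz by simp
  qed
  obtain x0 where x0: "x0 \<in> N" "coef x0 \<noteq> 0"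
    and x0min: "\<forall>y. y \<in> N \<and> coef y \<noteq> 0 \<longrightarrow> nat (v (coef x0) + int a) \<le> nat (v (coef y) + int a)"
    using ex_has_least_nat[of "\<lambda>x. x \<in> N \<and> coef x \<noteq> 0" "pi ^ a *s e" "\<lambda>x. nat (v (coef x) + int a)"] ex
    by blast
  define c0 where "c0 = coef x0"
  have c0nz: "c0 \<noteq> 0" using x0 c0_def by simp
  have minv: "v c0 \<le> v (coef y)" if "y \<in> N" "coef y \<noteq> 0" for y
  proof -
    have "nat (v (coef x0) + int a) \<le> nat (v (coef y) + int a)" using x0min that by blast
    then show ?thesis using bound[OF x0] bound[OF that] unfolding c0_def by linarith
  qed
  have x0nspan: "x0 \<notin> span b0"
  proof
    assume "x0 \<in> span b0"
    then have "coef x0 = 0" using coef_eq[OF x0(1), of 0] by simp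
    then show False using x0(2) by simp
  qed
  define g where "g = insert x0 g0"
  have x0g0: "x0 \<notin> span g0" using x0nspan g0(3) by simp
  then have x0ng0: "x0 \<notin> g0" using span_base by blast
  have indg: "independent g" unfolding g_def using independent_insertI[OF x0g0 g0(2)] .
  have spang: "span g = span (insert e b0)"
  proof (subst span_eq, intro conjI)
    have "g0 \<subseteq> span (insert e b0)"
      using span_superset[of g0] g0(3) span_mono[of b0 "insert e b0"] by auto
    then show "g \<subseteq> span (insert e b0)" using x0(1) insert.prems(2) by (auto simp: g_def)
  next
    have sg: "span g0 \<subseteq> span g" unfolding g_def by (rule span_mono) auto
    have "b0 \<subseteq> span g" using span_superset[of b0] g0(3) sg by auto
    moreover have "e \<in> span g"
    proof -
      have a1: "x0 - c0 *s e \<in> span g" using coef[OF x0(1)] g0(3) sg c0_def by auto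
      have a2: "x0 \<in> span g" unfolding g_def by (rule span_base) simp
      have "(1 / c0) *s (x0 - (x0 - c0 *s e)) \<in> span g"
        by (rule span_scale, rule span_diff[OF a2 a1])
      then show ?thesis using c0nz by simp
    qed
    ultimately show "insert e b0 \<subseteq> span g" by auto
  qed
  have gN: "g \<subseteq> N"
  proof -
    have "g0 \<subseteq> RS g0" using Rsp_base[OF g0(1)] by auto
    then have "g0 \<subseteq> N" using g0(4) N0_def by auto
    then show ?thesis using x0(1) g_def by auto
  qed
  have Ng: "N = RS g"
  proof (intro equalityI subsetI)
    fix x assume "x \<in> RS g"
    then show "x \<in> N" using Rsp_sub[OF insert.prems(3) gN] by auto
  next
    fix x assume x: "x \<in> N"
    define q where "q = coef x / c0"
    have qR: "q \<in> R" unfolding q_def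
      by (rule R_div[OF dv c0nz]) (use minv[OF x] in auto)
    define w where "w = x - q *s x0"
    have wN: "w \<in> N" unfolding w_def
      by (rule rsub_diff[OF insert.prems(3) x rsubD(3)[OF insert.prems(3) qR x0(1)]])
    have qc: "q * c0 = coef x" using c0nz by (simp add: q_def)
    have "w = (x - coef x *s e) - q *s (x0 - c0 *s e)"
      by (simp add: w_def scale_right_diff_distrib qc)
    then have "w \<in> span b0" using coef[OF x] coef[OF x0(1)] c0_def
      by (simp add: span_diff span_scale)
    then have "w \<in> RS g0" using wN g0(4) N0_def by auto
    then have "q *s x0 + w \<in> RS g" using Rsp_insert[OF g0(1) x0ng0] qR g_def by auto
    then show "x \<in> RS g" by (simp add: w_def)
  qed
  show ?case using g0(1) indg spang Ng g_def by auto
qed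

end



locale lctxB = lctx scale v pi for scale :: "'k::field \<Rightarrow> 'v::ab_group_add \<Rightarrow> 'v" (infixr \<open>*s\<close> 75)
  and v pi +
  fixes B :: "'v \<Rightarrow> 'v \<Rightarrow> 'k"
  assumes B_add1: "\<And>x y z. B (x + y) z = B x z + B y z"
    and B_add2: "\<And>x y z. B x (y + z) = B x y + B x z"
    and B_scale1: "\<And>c x y. B (c *s x) y = c * B x y"
    and B_scale2: "\<And>c x y. B x (c *s y) = c * B x y"
    and B_nondeg: "\<And>x. (\<forall>y. B x y = 0) \<Longrightarrow> x = 0"
    and B_sym: "\<And>x y. B y x = B x y \<or> B y x = - B x y"
begin

abbreviation "dual M \<equiv> dual_lattice R B M"

lemma B_zero1[simp]: "B 0 y = 0" using B_scale1[of 0 0 y] by simp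
lemma B_zero2[simp]: "B x 0 = 0" using B_scale2[of x 0 0] by simp
lemma B_neg2: "B x (- y) = - B x y" using B_scale2[of x "-1" y] by simp
lemma B_diff2: "B x (y - z) = B x y - B x z" using B_add2[of x y "- z"] B_neg2[of x z] by simp

lemma B_sum1: "B (sum f I) y = (\<Sum>i\<in>I. B (f i) y)"
  by (induction I rule: infinite_finite_induct) (auto simp: B_add1)

lemma B_symR: "B y x \<in> R \<longleftrightarrow> B x y \<in> R"
  using B_sym[of x y] B_sym[of y x] R_neg[OF dv] by (metis minus_minus)

lemma dual_rsub: "rsub (dual M)"
  unfolding rsub_def dual_lattice_def
  by (auto simp: B_add1 B_scale1 R_zero[OF dv] R_add[OF dv] R_mult[OF dv])

lemma dual_anti: "M \<subseteq> N \<Longrightarrow> dual N \<subseteq> dual M"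
  unfolding dual_lattice_def by auto

lemma coeff_unique: assumes "finite b" "independent b"
  "(\<Sum>x\<in>b. c x *s x) = (\<Sum>x\<in>b. d x *s x)" "x \<in> b" shows "c x = d x"
proof (rule ccontr)
  assume ne: "c x \<noteq> d x"
  have "(\<Sum>x\<in>b. (c x - d x) *s x) = 0"
    using assms(3) by (simp add: scale_left_diff_distrib sum_subtractf)
  then have "dependent b" using dependent_finite[OF assms(1)] ne assms(4)
    by (intro iffD2[OF dependent_finite[OF assms(1)]] exI[of _ "\<lambda>x. c x - d x"]) auto
  then show False using assms(2) by simp
qed

lemma DB: assumes b: "finite b" "independent b" "span b = UNIV"
  shows "\<exists>n. \<forall>x\<in>dual (RS b). pi ^ n *s x \<in> RS b"
proof -
  define S where "S y = (\<Sum>e\<in>b. B e y *s e)" for y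
  have Sadd: "S (x + y) = S x + S y" for x y
    by (simp add: S_def B_add2 scale_left_distrib sum.distrib)
  have Sdiff: "S (x - y) = S x - S y" for x y
    by (simp add: S_def B_diff2 scale_left_diff_distrib sum_subtractf)
  have Sscale: "S (c *s x) = c *s S x" for c x
    by (simp add: S_def B_scale2 scale_sum_right)
  have lin: "Vector_Spaces.linear (*s) (*s) S"
    by (rule Vector_Spaces.linear_iff[THEN iffD2]) (use Sadd Sscale vector_space_axioms in blast)
  have ker: "y = 0" if "S y = 0" for y
  proof -
    have "(\<Sum>e\<in>b. B e y *s e) = (\<Sum>e\<in>b. 0 *s e)" using that by (simp add: S_def)
    then have z: "B e y = 0" if "e \<in> b" for e
      using coeff_unique[OF b(1,2), of "\<lambda>e. B e y" "\<lambda>_. 0"] that by simp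
    have "B x y = 0" for x
    proof -
      have "x \<in> span b" using b(3) by simp
      then show ?thesis
      proof (induction rule: span_induct_alt)
        case base then show ?case by simp
      next
        case (step c x z) then show ?case using z by (simp add: B_add1 B_scale1)
      qed
    qed
    then have "B y x = 0" for x using B_sym[of x y] by auto
    then show "y = 0" using B_nondeg by blast
  qed
  have "inj S"
  proof (rule injI)
    fix x y assume "S x = S y"
    then have "S (x - y) = 0" by (simp add: Sdiff)
    then have "x - y = 0" by (rule ker)
    then show "x = y" by simp
  qed
  interpret fd: finite_dimensional_vector_space scale b
    using b by unfold_locales auto
  have surj: "surj S" using fd.linear_inj_imp_surj[OF lin \<open>inj S\<close>] .
  define yv where "yv e = (SOME y. S y = e)" for e
  have Syv: "S (yv e) = e" for e
  proof -
    have "\<exists>y. S y = e" using surj by (metis surjD)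
    then show ?thesis unfolding yv_def by (rule someI_ex)
  qed
  have delta: "B e' (yv e) = (if e' = e then 1 else 0)" if "e \<in> b" "e' \<in> b" for e e'
  proof -
    have "(\<Sum>x\<in>b. B x (yv e) *s x) = (\<Sum>x\<in>b. (if x = e then 1 else 0) *s x)"
    proof -
      have "(\<Sum>x\<in>b. (if x = e then 1 else 0) *s x) = (\<Sum>x\<in>b. if x = e then x else 0)"
        by (rule sum.cong) auto
      also have "\<dots> = e" using that b(1) by (simp add: sum.delta)
      finally show ?thesis using Syv[of e] by (simp add: S_def)
    qed
    then show ?thesis using coeff_unique[OF b(1,2) _ that(2), of "\<lambda>x. B x (yv e)" "\<lambda>x. if x = e then 1 else 0"] by simp
  qed
  obtain n where n: "\<forall>y\<in>yv ` b. pi ^ n *s y \<in> RS b"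
    using G[OF b(1), of "yv ` b"] b by auto
  have "pi ^ n *s x \<in> RS b" if x: "x \<in> dual (RS b)" for x
  proof -
    obtain a where a: "x = (\<Sum>e\<in>b. a e *s e)" using span_finite[OF b(1)] b(3) by auto
    have "pi ^ n * a e \<in> R" if e: "e \<in> b" for e
    proof -
      have "B x (yv e) = (\<Sum>e'\<in>b. a e' * B e' (yv e))" by (simp add: a B_sum1 B_scale1)
      also have "\<dots> = (\<Sum>e'\<in>b. if e' = e then a e' else 0)"
        by (rule sum.cong) (auto simp: delta e)
      also have "\<dots> = a e" using e b(1) by (simp add: sum.delta)
      finally have "pi ^ n * a e = B x (pi ^ n *s yv e)" by (simp add: B_scale2)
      moreover have "B x (pi ^ n *s yv e) \<in> R" using x n e unfolding dual_lattice_def by auto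
      ultimately show ?thesis by simp
    qed
    moreover have "pi ^ n *s x = (\<Sum>e\<in>b. (pi ^ n * a e) *s e)" by (simp add: a scale_sum_right)
    ultimately show ?thesis unfolding Rsp_def by (intro CollectI exI[of _ "\<lambda>e. pi ^ n * a e"]) auto
  qed
  then show ?thesis by blast
qed

end



lemma B_sum2_gen: assumes "\<And>x y z. B x (y + z) = B x y + B x z" "\<And>x. B x 0 = 0"
  shows "B x (sum f I) = (\<Sum>i\<in>I. B x (f i))"
  by (induction I rule: infinite_finite_induct) (auto simp: assms)

locale lctxA = lctxB scale v pi B for scale :: "'k::field \<Rightarrow> 'v::ab_group_add \<Rightarrow> 'v" (infixr \<open>*s\<close> 75)
  and v pi B +
  fixes act :: "'a \<Rightarrow> 'v \<Rightarrow> 'v" and inv :: "'a \<Rightarrow> 'a"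
  assumes act_add2: "\<And>a x y. act a (x + y) = act a x + act a y"
    and act_R2: "\<And>r a x. r \<in> val_ring v \<Longrightarrow> act a (r *s x) = r *s (act a x)"
    and B_adj: "\<And>a x y. B (act a x) y = B x (act (inv a) y)"
begin

definition stable :: "'v set \<Rightarrow> bool" where
  "stable M \<longleftrightarrow> (\<forall>a x. x \<in> M \<longrightarrow> act a x \<in> M)"

lemma dual_stable: "stable M \<Longrightarrow> stable (dual M)"
  unfolding stable_def dual_lattice_def by (auto simp: B_adj)

lemma lattice_iff: "is_lattice scale R M \<longleftrightarrow>
   (\<exists>b. finite b \<and> independent b \<and> span b = UNIV \<and> M = RS b)"
  unfolding is_lattice_def Rsp_def by auto

lemma B_sum2: "B x (sum f I) = (\<Sum>i\<in>I. B x (f i))"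
  by (rule B_sum2_gen) (auto simp: B_add2)

lemma lattice_from_sandwich:
  assumes M: "is_lattice scale R M" and N: "rsub N" "M \<subseteq> N" "N \<subseteq> dual M"
  shows "is_lattice scale R N"
proof -
  obtain b where b: "finite b" "independent b" "span b = UNIV" "M = RS b" using M lattice_iff by auto
  obtain n where n: "\<forall>x\<in>dual (RS b). pi ^ n *s x \<in> RS b" using DB[OF b(1-3)] by auto
  have "\<exists>g. finite g \<and> independent g \<and> span g = span b \<and> N = RS g"
  proof (rule sandwich[OF b(1,2) _ N(1)])
    show "N \<subseteq> span b" using b(3) by simp
    show "\<forall>e\<in>b. pi ^ n *s e \<in> N"
      using Rsp_base[OF b(1)] rsubD(3)[OF rsub_Rsp pipow_R] b(4) N(2) by blast
    show "\<forall>x\<in>N. pi ^ n *s x \<in> RS b" using n N(3) b(4) by auto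
  qed
  then show ?thesis using b(3) lattice_iff by auto
qed

lemma main_ind:
  assumes "is_lattice scale R M" "stable M" "M \<subseteq> dual M" "(\<lambda>x. pi ^ Suc m *s x) ` dual M \<subseteq> M"
  shows "\<exists>M. is_lattice scale R M \<and> stable M \<and> almost_self_dual scale R pi B M"
  using assms
proof (induction m arbitrary: M)
  case 0
  then show ?case unfolding almost_self_dual_def by (intro exI[of _ M]) auto
next
  case (Suc m M)
  define k where "k = Suc m"
  have rM: "rsub M" using Suc.prems(1) lattice_iff rsub_Rsp by auto
  have rD: "rsub (dual M)" by (rule dual_rsub)
  define N where "N = {x + pi ^ k *s u | x u. x \<in> M \<and> u \<in> dual M}"
  have rN: "rsub N" unfolding rsub_def
  proof (intro conjI ballI)
    show "0 \<in> N" unfolding N_def using rsubD(1)[OF rM] rsubD(1)[OF rD]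
      by (intro CollectI exI[of _ 0]) simp
  next
    fix y1 y2 assume "y1 \<in> N" "y2 \<in> N"
    then obtain x1 u1 x2 u2 where "x1 \<in> M" "u1 \<in> dual M" "x2 \<in> M" "u2 \<in> dual M"
      "y1 = x1 + pi ^ k *s u1" "y2 = x2 + pi ^ k *s u2" unfolding N_def by auto
    moreover have "(x1 + pi ^ k *s u1) + (x2 + pi ^ k *s u2) = (x1 + x2) + pi ^ k *s (u1 + u2)"
      by (simp add: scale_right_distrib algebra_simps)
    ultimately show "y1 + y2 \<in> N" unfolding N_def using rsubD(2)[OF rM] rsubD(2)[OF rD] by blast
  next
    fix r y assume r: "r \<in> R" and "y \<in> N"
    then obtain x u where "x \<in> M" "u \<in> dual M" "y = x + pi ^ k *s u" unfolding N_def by auto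
    moreover have "r *s (x + pi ^ k *s u) = r *s x + pi ^ k *s (r *s u)"
      by (simp add: scale_right_distrib mult.commute)
    ultimately show "r *s y \<in> N" unfolding N_def using rsubD(3)[OF rM r] rsubD(3)[OF rD r] by blast
  qed
  have MN: "M \<subseteq> N" unfolding N_def using rsubD(1)[OF rD] by force
  have NN: "N \<subseteq> dual N"
  proof
    fix y1 assume "y1 \<in> N"
    then obtain x1 u1 where h1: "x1 \<in> M" "u1 \<in> dual M" "y1 = x1 + pi ^ k *s u1" unfolding N_def by auto
    show "y1 \<in> dual N" unfolding dual_lattice_def
    proof (rule CollectI, rule ballI)
      fix y2 assume "y2 \<in> N"
      then obtain x2 u2 where h2: "x2 \<in> M" "u2 \<in> dual M" "y2 = x2 + pi ^ k *s u2" unfolding N_def by auto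
      have t1: "B x1 x2 \<in> R" using h1(1) h2(1) Suc.prems(3) unfolding dual_lattice_def by auto
      have t2: "B x1 u2 \<in> R" using h1(1) h2(2) B_symR unfolding dual_lattice_def by auto
      have t3: "B u1 x2 \<in> R" using h1(2) h2(1) unfolding dual_lattice_def by auto
      have w: "pi ^ Suc (Suc m) *s u1 \<in> M" using Suc.prems(4) h1(2) by auto
      then have "B (pi ^ Suc (Suc m) *s u1) u2 \<in> R" using h2(2) B_symR unfolding dual_lattice_def by auto
      then have t4': "pi ^ Suc (Suc m) * B u1 u2 \<in> R" by (simp add: B_scale1)
      have keq: "pi ^ k * (pi ^ k * B u1 u2) = pi ^ m * (pi ^ Suc (Suc m) * B u1 u2)"
        unfolding k_def by (simp add: power_add[symmetric] mult.assoc[symmetric])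
      have t4: "pi ^ k * (pi ^ k * B u1 u2) \<in> R" unfolding keq by (rule R_mult[OF dv pipow_R t4'])
      have "B y1 y2 = B x1 x2 + pi ^ k * B x1 u2 + (pi ^ k * B u1 x2 + pi ^ k * (pi ^ k * B u1 u2))"
        unfolding h1(3) h2(3) by (simp add: B_add1 B_add2 B_scale1 B_scale2 algebra_simps)
      then show "B y1 y2 \<in> R"
        using t1 t2 t3 t4 by (simp add: R_add[OF dv] R_mult[OF dv] pipow_R)
    qed
  qed
  have dNM: "dual N \<subseteq> dual M" by (rule dual_anti[OF MN])
  have latN: "is_lattice scale R N"
    by (rule lattice_from_sandwich[OF Suc.prems(1) rN MN]) (use NN dNM in auto)
  have stN: "stable N" unfolding stable_def
  proof (intro allI impI)
    fix a y assume "y \<in> N"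
    then obtain x u where h: "x \<in> M" "u \<in> dual M" "y = x + pi ^ k *s u" unfolding N_def by auto
    have "act a y = act a x + pi ^ k *s act a u" by (simp add: h(3) act_add2 act_R2 pipow_R)
    moreover have "act a x \<in> M" using Suc.prems(2) h(1) stable_def by auto
    moreover have "act a u \<in> dual M" using dual_stable[OF Suc.prems(2)] h(2) stable_def by auto
    ultimately show "act a y \<in> N" unfolding N_def by blast
  qed
  have pN: "(\<lambda>x. pi ^ Suc m *s x) ` dual N \<subseteq> N"
  proof
    fix y assume "y \<in> (\<lambda>x. pi ^ Suc m *s x) ` dual N"
    then obtain z where z: "z \<in> dual N" "y = pi ^ k *s z" unfolding k_def by auto
    then have "z \<in> dual M" using dNM by auto
    moreover have "y = 0 + pi ^ k *s z" using z by simp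
    ultimately show "y \<in> N" unfolding N_def using rsubD(1)[OF rM] by blast
  qed
  show ?case by (rule Suc.IH[OF latN stN NN pN])
qed

theorem main:
  assumes L: "is_lattice scale R L" "stable L"
  shows "\<exists>M. is_lattice scale R M \<and> stable M \<and> almost_self_dual scale R pi B M"
proof -
  obtain b where b: "finite b" "independent b" "span b = UNIV" "L = RS b" using L lattice_iff by auto
  have rL: "rsub L" using b(4) rsub_Rsp by simp
  have "finite ((\<lambda>(e, e'). B e e') ` (b \<times> b))" using b(1) by simp
  from H[OF this] obtain n where n: "\<forall>z\<in>(\<lambda>(e, e'). B e e') ` (b \<times> b). pi ^ n * z \<in> R" by auto
  then have n': "pi ^ n * B e e' \<in> R" if "e \<in> b" "e' \<in> b" for e e' using that by auto
  define M0 where "M0 = (\<lambda>x. pi ^ n *s x) ` L"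
  have M0L: "M0 \<subseteq> L" unfolding M0_def using rsubD(3)[OF rL pipow_R] by auto
  have rM0: "rsub M0" unfolding rsub_def M0_def
  proof (intro conjI ballI)
    show "0 \<in> (\<lambda>x. pi ^ n *s x) ` L" using rsubD(1)[OF rL] by (intro image_eqI[of _ _ 0]) auto
  next
    fix x y assume "x \<in> (\<lambda>x. pi ^ n *s x) ` L" "y \<in> (\<lambda>x. pi ^ n *s x) ` L"
    then obtain x' y' where "x' \<in> L" "y' \<in> L" "x = pi ^ n *s x'" "y = pi ^ n *s y'" by auto
    then show "x + y \<in> (\<lambda>x. pi ^ n *s x) ` L" using rsubD(2)[OF rL]
      by (intro image_eqI[of _ _ "x' + y'"]) (auto simp: scale_right_distrib)
  next
    fix r x assume r: "r \<in> R" and "x \<in> (\<lambda>x. pi ^ n *s x) ` L"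
    then obtain x' where "x' \<in> L" "x = pi ^ n *s x'" by auto
    then show "r *s x \<in> (\<lambda>x. pi ^ n *s x) ` L" using rsubD(3)[OF rL r]
      by (intro image_eqI[of _ _ "r *s x'"]) (auto simp: mult.commute)
  qed
  have latM0: "is_lattice scale R M0"
  proof -
    have "\<exists>g. finite g \<and> independent g \<and> span g = span b \<and> M0 = RS g"
    proof (rule sandwich[OF b(1,2) _ rM0])
      show "M0 \<subseteq> span b" using b(3) by simp
      show "\<forall>e\<in>b. pi ^ n *s e \<in> M0" using Rsp_base[OF b(1)] b(4) M0_def by auto
      show "\<forall>x\<in>M0. pi ^ n *s x \<in> RS b" using M0L b(4) rsubD(3)[OF rL pipow_R] by auto
    qed
    then show ?thesis using b(3) lattice_iff by auto
  qed
  have stM0: "stable M0" using L(2) unfolding stable_def M0_def by (auto simp: act_R2 pipow_R)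
  have BL: "pi ^ n * B x y \<in> R" if xy: "x \<in> L" "y \<in> L" for x y
  proof -
    obtain c where c: "\<forall>e\<in>b. c e \<in> R" "x = (\<Sum>e\<in>b. c e *s e)" using xy(1) b(4) unfolding Rsp_def by auto
    obtain d where d: "\<forall>e\<in>b. d e \<in> R" "y = (\<Sum>e\<in>b. d e *s e)" using xy(2) b(4) unfolding Rsp_def by auto
    have "pi ^ n * B x y = (\<Sum>e'\<in>b. \<Sum>e\<in>b. c e * d e' * (pi ^ n * B e e'))"
      by (simp add: c(2) d(2) B_sum1 B_sum2 B_scale1 B_scale2 sum_distrib_left algebra_simps)
    also have "\<dots> \<in> R"
    proof (intro R_sum[OF dv])
      fix e e' assume ee: "e' \<in> b" "e \<in> b"
      show "c e * d e' * (pi ^ n * B e e') \<in> R"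
        by (rule R_mult[OF dv R_mult[OF dv] n']) (use c(1) d(1) ee in auto)
    qed
    finally show ?thesis .
  qed
  have M0d: "M0 \<subseteq> dual M0"
  proof
    fix x assume "x \<in> M0"
    then obtain x' where x': "x' \<in> L" "x = pi ^ n *s x'" unfolding M0_def by auto
    show "x \<in> dual M0" unfolding dual_lattice_def
    proof (rule CollectI, rule ballI)
      fix y assume "y \<in> M0"
      then obtain y' where y': "y' \<in> L" "y = pi ^ n *s y'" unfolding M0_def by auto
      have "B x y = pi ^ n * (pi ^ n * B x' y')" using x' y' by (simp add: B_scale1 B_scale2)
      then show "B x y \<in> R" using R_mult[OF dv pipow_R BL[OF x'(1) y'(1)]] by simp
    qed
  qed
  obtain b0 where b0: "finite b0" "independent b0" "span b0 = UNIV" "M0 = RS b0"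
    using latM0 lattice_iff by auto
  obtain c where c: "\<forall>x\<in>dual (RS b0). pi ^ c *s x \<in> RS b0" using DB[OF b0(1-3)] by auto
  have "(\<lambda>x. pi ^ Suc c *s x) ` dual M0 \<subseteq> M0"
  proof
    fix y assume "y \<in> (\<lambda>x. pi ^ Suc c *s x) ` dual M0"
    then obtain z where z: "z \<in> dual M0" "y = pi ^ Suc c *s z" by auto
    have "pi ^ c *s z \<in> M0" using c z(1) b0(4) by auto
    then have "pi *s (pi ^ c *s z) \<in> M0" by (rule rsubD(3)[OF rM0 pi_R])
    then show "y \<in> M0" using z(2) by simp
  qed
  then show ?thesis using main_ind[OF latM0 stM0 M0d] by blast
qed

end

theorem theorem5p2p1:
  fixes v :: "'k::field \<Rightarrow> int"
    and pi :: 'k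
    and scale :: "'k \<Rightarrow> 'v::ab_group_add \<Rightarrow> 'v"
    and alg :: "'k \<Rightarrow> 'a::ring_1"
    and inv :: "'a \<Rightarrow> 'a"
    and act :: "'a \<Rightarrow> 'v \<Rightarrow> 'v"
    and B :: "'v \<Rightarrow> 'v \<Rightarrow> 'k"
    and L :: "'v set"
  assumes dv: "discrete_valuation v"
    and unif: "pi \<noteq> 0" "v pi = 1"
    \<comment> \<open>A is an R-algebra via alg : R \<rightarrow> centre of A\<close>
    and alg_one: "alg 1 = 1"
    and alg_add: "\<And>r s. r \<in> val_ring v \<Longrightarrow> s \<in> val_ring v \<Longrightarrow> alg (r + s) = alg r + alg s"
    and alg_mult: "\<And>r s. r \<in> val_ring v \<Longrightarrow> s \<in> val_ring v \<Longrightarrow> alg (r * s) = alg r * alg s"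
    and alg_central: "\<And>r a. r \<in> val_ring v \<Longrightarrow> alg r * a = a * alg r"
    \<comment> \<open>R-linear involution of A\<close>
    and inv_add: "\<And>a b. inv (a + b) = inv a + inv b"
    and inv_lin: "\<And>r a. r \<in> val_ring v \<Longrightarrow> inv (alg r * a) = alg r * inv a"
    and inv_mult: "\<And>a b. inv (a * b) = inv b * inv a"
    and inv_inv: "\<And>a. inv (inv a) = a"
    \<comment> \<open>V a finite-dimensional K-vector space\<close>
    and vs: "vector_space scale"
    and fin_dim: "\<exists>S. finite S \<and> module.span scale S = UNIV"
    \<comment> \<open>V an A-module via an R-bilinear map\<close>
    and act_add1: "\<And>a b x. act (a + b) x = act a x + act b x"
    and act_add2: "\<And>a x y. act a (x + y) = act a x + act a y"
    and act_R1: "\<And>r a x. r \<in> val_ring v \<Longrightarrow> act (alg r * a) x = scale r (act a x)"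
    and act_R2: "\<And>r a x. r \<in> val_ring v \<Longrightarrow> act a (scale r x) = scale r (act a x)"
    and act_one: "\<And>x. act 1 x = x"
    and act_mult: "\<And>a b x. act (a * b) x = act a (act b x)"
    \<comment> \<open>an A-stable lattice L\<close>
    and L_lat: "is_lattice scale (val_ring v) L"
    and L_stable: "\<And>a x. x \<in> L \<Longrightarrow> act a x \<in> L"
    \<comment> \<open>nondegenerate K-bilinear form compatible with the involution\<close>
    and B_add1: "\<And>x y z. B (x + y) z = B x z + B y z"
    and B_add2: "\<And>x y z. B x (y + z) = B x y + B x z"
    and B_scale1: "\<And>c x y. B (scale c x) y = c * B x y"
    and B_scale2: "\<And>c x y. B x (scale c y) = c * B x y"
    and B_nondeg: "\<And>x. (\<forall>y. B x y = 0) \<Longrightarrow> x = 0"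
    and B_adj: "\<And>a x y. B (act a x) y = B x (act (inv a) y)"
    and B_type: "(\<forall>x. B x x = 0) \<or> ((\<forall>x y. B x y = B y x) \<and> residue_char_not_2 v)"
  shows "\<exists>M. is_lattice scale (val_ring v) M \<and> (\<forall>a x. x \<in> M \<longrightarrow> act a x \<in> M) \<and>
             almost_self_dual scale (val_ring v) pi B M"
  proof -
  have Bsym: "B y x = B x y \<or> B y x = - B x y" for x y
    using B_type
  proof
    assume alt: "\<forall>x. B x x = 0"
    have "B (x + y) (x + y) = 0" using alt by blast
    then have "B x x + B x y + (B y x + B y y) = 0" by (simp add: B_add1 B_add2 algebra_simps)
    then have "B y x = - B x y" using alt by (simp add: add_eq_0_iff)
    then show ?thesis by blast
  next
    assume "(\<forall>x y. B x y = B y x) \<and> residue_char_not_2 v"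
    then show ?thesis by auto
  qed
  interpret lctxA scale v pi B act inv
    apply unfold_locales
    using vs unfolding vector_space_def apply auto[4]
    using dv unif B_add1 B_add2 B_scale1 B_scale2 B_nondeg Bsym act_add2 act_R2 B_adj
    by auto
  have "stable L" using L_stable unfolding stable_def by auto
  from main[OF L_lat this] show ?thesis unfolding stable_def by auto
qed

end
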